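(* Let $X$ be a connected quandle of type $t<\infty$. Then for all $x,y\in X$, $e_x^{t}=e_y^{t}$ in $\mathrm{As}(X)$, and this element lies in the center of $\mathrm{As}(X)$.
   Context: A quandle is a set $X$ with a binary operation $\lhd$ such that $a\lhd a=a$ for all $a$, each map $x\mapsto x\lhd a$ is a bijection of $X$, and $(a\lhd b)\lhd c=(a\lhd c)\lhd(b\lhd c)$ for all $a,b,c$. The adjoint group $\mathrm{As}(X)$ is the group with generators $e_x$ ($x\in X$) and relations $e_{x\lhd y}=e_y^{-1}e_xe_y$. It acts on $X$ from the right by $x\cdot e_y=x\lhd y$; $X$ is connected if this action is transitive. $x\lhd^N y$ denotes the $N$-fold application of $\bullet\lhd y$ to $x$; $X$ is of type $t$ if $t$ is the smallest positive integer $N$ with $x\lhd^N y=x$ for all $x,y\in X$. *)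

theory Defs
  imports "HOL-Algebra.Group"
begin

text \<open>A quandle on the carrier set X with operation op (op a b stands for a \<lhd> b).\<close>
definition quandle :: "'a set \<Rightarrow> ('a \<Rightarrow> 'a \<Rightarrow> 'a) \<Rightarrow> bool" where
  "quandle X op \<longleftrightarrow>
     (\<forall>a\<in>X. \<forall>b\<in>X. op a b \<in> X) \<and>
     (\<forall>a\<in>X. op a a = a) \<and>
     (\<forall>b\<in>X. bij_betw (\<lambda>x. op x b) X X) \<and>
     (\<forall>a\<in>X. \<forall>b\<in>X. \<forall>c\<in>X. op (op a b) c = op (op a c) (op b c))"

text \<open>Words in the generators: (x, True) stands for e_x and (x, False) for e_x inverse.\<close>
definition words :: "'a set \<Rightarrow> ('a \<times> bool) list set" where
  "words X = {w. set w \<subseteq> X \<times> UNIV}"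

inductive_set as_rel :: "'a set \<Rightarrow> ('a \<Rightarrow> 'a \<Rightarrow> 'a) \<Rightarrow> (('a \<times> bool) list \<times> ('a \<times> bool) list) set"
  for X op where
  refl: "w \<in> words X \<Longrightarrow> (w, w) \<in> as_rel X op"
| sym: "(u, v) \<in> as_rel X op \<Longrightarrow> (v, u) \<in> as_rel X op"
| trans: "(u, v) \<in> as_rel X op \<Longrightarrow> (v, w) \<in> as_rel X op \<Longrightarrow> (u, w) \<in> as_rel X op"
| cong: "(u, v) \<in> as_rel X op \<Longrightarrow> a \<in> words X \<Longrightarrow> b \<in> words X \<Longrightarrow>
         (a @ u @ b, a @ v @ b) \<in> as_rel X op"
| cancel: "x \<in> X \<Longrightarrow> ([(x, s), (x, \<not> s)], []) \<in> as_rel X op"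
| conj: "x \<in> X \<Longrightarrow> y \<in> X \<Longrightarrow>
         ([(op x y, True)], [(y, False), (x, True), (y, True)]) \<in> as_rel X op"

definition adjoint_group :: "'a set \<Rightarrow> ('a \<Rightarrow> 'a \<Rightarrow> 'a) \<Rightarrow> ('a \<times> bool) list set monoid" where
  "adjoint_group X op =
     \<lparr> carrier = words X // as_rel X op,
       mult = (\<lambda>A B. as_rel X op `` {a @ b | a b. a \<in> A \<and> b \<in> B}),
       one = as_rel X op `` {[]} \<rparr>"

definition gen :: "'a set \<Rightarrow> ('a \<Rightarrow> 'a \<Rightarrow> 'a) \<Rightarrow> 'a \<Rightarrow> ('a \<times> bool) list set" where
  "gen X op x = as_rel X op `` {[(x, True)]}"

text \<open>Connectedness: the action of As(X) on X (generated by the maps x \<mapsto> x \<lhd> y and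
  their inverses) is transitive, i.e. any two elements are related by the reflexive
  transitive closure of the symmetric relation a ~ a \<lhd> b.\<close>
definition quandle_connected :: "'a set \<Rightarrow> ('a \<Rightarrow> 'a \<Rightarrow> 'a) \<Rightarrow> bool" where
  "quandle_connected X op \<longleftrightarrow>
     (\<forall>x\<in>X. \<forall>y\<in>X. (x, y) \<in> ({(a, op a b) | a b. a \<in> X \<and> b \<in> X} \<union>
                              {(op a b, a) | a b. a \<in> X \<and> b \<in> X})\<^sup>*)"

definition quandle_type :: "'a set \<Rightarrow> ('a \<Rightarrow> 'a \<Rightarrow> 'a) \<Rightarrow> nat \<Rightarrow> bool" where
  "quandle_type X op t \<longleftrightarrow>
     t > 0 \<and> (\<forall>x\<in>X. \<forall>y\<in>X. ((\<lambda>z. op z y) ^^ t) x = x) \<and>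
     (\<forall>N. 0 < N \<and> N < t \<longrightarrow> \<not> (\<forall>x\<in>X. \<forall>y\<in>X. ((\<lambda>z. op z y) ^^ N) x = x))"

end

theory Submission
  imports Defs
begin

lemma as_rel_words:
  assumes q: "quandle X op" and r: "(u, v) \<in> as_rel X op"
  shows "u \<in> words X \<and> v \<in> words X"
  using r
proof induction
  case (conj x y)
  then have "op x y \<in> X" using q unfolding quandle_def by blast
  then show ?case using conj by (auto simp: words_def)
qed (auto simp: words_def)

lemma as_rel_equiv:
  assumes q: "quandle X op"
  shows "equiv (words X) (as_rel X op)"
  unfolding equiv_def refl_on_def sym_def trans_def
  apply (intro conjI)
  subgoal using as_rel_words[OF q] by auto
  subgoal using as_rel.refl by blast
  subgoal using as_rel.sym by blast
  subgoal using as_rel.trans by blast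
  done

lemma words_append [simp]: "(a @ b \<in> words X) = (a \<in> words X \<and> b \<in> words X)"
  by (auto simp: words_def)

lemma words_Cons [simp]: "(l # b \<in> words X) = (fst l \<in> X \<and> b \<in> words X)"
  by (cases l) (auto simp: words_def)

lemma words_Nil [simp]: "[] \<in> words X"
  by (auto simp: words_def)

lemma words_replicate [simp]: "x \<in> X \<Longrightarrow> replicate n (x, s) \<in> words X"
  by (auto simp: words_def)

lemma mult_cls:
  assumes q: "quandle X op" and u: "u \<in> words X" and v: "v \<in> words X"
  shows "as_rel X op `` {a @ b | a b. a \<in> as_rel X op `` {u} \<and> b \<in> as_rel X op `` {v}}
         = as_rel X op `` {u @ v}"
proof
  show "as_rel X op `` {u @ v} \<subseteq> as_rel X op `` {a @ b | a b. a \<in> as_rel X op `` {u} \<and> b \<in> as_rel X op `` {v}}"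
    using u v as_rel.refl[of u X op] as_rel.refl[of v X op] by blast
next
  show "as_rel X op `` {a @ b | a b. a \<in> as_rel X op `` {u} \<and> b \<in> as_rel X op `` {v}} \<subseteq> as_rel X op `` {u @ v}"
  proof
    fix z assume "z \<in> as_rel X op `` {a @ b | a b. a \<in> as_rel X op `` {u} \<and> b \<in> as_rel X op `` {v}}"
    then obtain a b where ab: "(u, a) \<in> as_rel X op" "(v, b) \<in> as_rel X op" "(a @ b, z) \<in> as_rel X op"
      by blast
    have aw: "a \<in> words X" using as_rel_words[OF q ab(1)] by simp
    have "(u @ v, a @ v) \<in> as_rel X op" using as_rel.cong[OF ab(1), of "[]" v] v by simp
    moreover have "(a @ v, a @ b) \<in> as_rel X op" using as_rel.cong[OF ab(2), of a "[]"] aw by simp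
    ultimately have "(u @ v, z) \<in> as_rel X op" using ab(3) as_rel.trans by blast
    then show "z \<in> as_rel X op `` {u @ v}" by blast
  qed
qed

lemma mult_adj:
  assumes q: "quandle X op" and u: "u \<in> words X" and v: "v \<in> words X"
  shows "(as_rel X op `` {u}) \<otimes>\<^bsub>adjoint_group X op\<^esub> (as_rel X op `` {v}) = as_rel X op `` {u @ v}"
  unfolding adjoint_group_def by (simp only: monoid.select_convs mult_cls[OF q u v])

lemma pow_gen:
  assumes q: "quandle X op" and x: "x \<in> X"
  shows "gen X op x [^]\<^bsub>adjoint_group X op\<^esub> (n::nat) = as_rel X op `` {replicate n (x, True)}"
proof (induction n)
  case 0
  then show ?case by (simp add: nat_pow_def adjoint_group_def)
next
  case (Suc n)
  have "gen X op x [^]\<^bsub>adjoint_group X op\<^esub> Suc n =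
        gen X op x [^]\<^bsub>adjoint_group X op\<^esub> n \<otimes>\<^bsub>adjoint_group X op\<^esub> gen X op x"
    by (simp add: nat_pow_def)
  also have "\<dots> = as_rel X op `` {replicate n (x, True) @ [(x, True)]}"
    using mult_adj[OF q, of "replicate n (x, True)" "[(x, True)]"] x
    by (simp only: Suc.IH) (simp add: gen_def)
  also have "replicate n (x, True) @ [(x, True)] = replicate (Suc n) (x, True)"
    by (simp add: replicate_append_same)
  finally show ?case .
qed

lemma swap_rel:
  assumes q: "quandle X op" and a: "a \<in> X" and b: "b \<in> X"
  shows "([(b, True), (op a b, True)], [(a, True), (b, True)]) \<in> as_rel X op"
proof -
  have h1: "([(b, True), (op a b, True)], [(b, True), (b, False), (a, True), (b, True)]) \<in> as_rel X op"
    using as_rel.cong[OF as_rel.conj[OF a b], of "[(b,True)]" "[]"] b by simp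
  have h2: "([(b, True), (b, False), (a, True), (b, True)], [(a, True), (b, True)]) \<in> as_rel X op"
    using as_rel.cong[OF as_rel.cancel[OF b, of True], of "[]" "[(a, True), (b, True)]"] a b by simp
  show ?thesis using as_rel.trans[OF h1 h2] .
qed

lemma quandle_closed: "quandle X op \<Longrightarrow> a \<in> X \<Longrightarrow> b \<in> X \<Longrightarrow> op a b \<in> X"
  unfolding quandle_def by blast

lemma swap_pow:
  assumes q: "quandle X op" and x: "x \<in> X"
  shows "y \<in> X \<Longrightarrow> ((y, True) # replicate n (x, True),
             replicate n (x, True) @ [(((\<lambda>z. op z x) ^^ n) y, True)]) \<in> as_rel X op"
proof (induction n arbitrary: y)
  case 0
  then show ?case using as_rel.refl[of "[(y,True)]" X op] by simp
next
  case (Suc n)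
  let ?y' = "op y x"
  have y': "?y' \<in> X" using quandle_closed[OF q Suc.prems x] .
  have s: "([(x, True), (?y', True)], [(y, True), (x, True)]) \<in> as_rel X op"
    using swap_rel[OF q Suc.prems x] .
  have h1: "((y, True) # (x, True) # replicate n (x, True), (x, True) # (?y', True) # replicate n (x, True)) \<in> as_rel X op"
    using as_rel.cong[OF as_rel.sym[OF s], of "[]" "replicate n (x, True)"] x by simp
  have h2: "((x, True) # (?y', True) # replicate n (x, True),
      (x, True) # replicate n (x, True) @ [(((\<lambda>z. op z x) ^^ n) ?y', True)]) \<in> as_rel X op"
    using as_rel.cong[OF Suc.IH[OF y'], of "[(x,True)]" "[]"] x by simp
  have e: "((\<lambda>z. op z x) ^^ n) ?y' = ((\<lambda>z. op z x) ^^ Suc n) y"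
    by (simp add: funpow_Suc_right del: funpow.simps)
  show ?case using as_rel.trans[OF h1 h2] unfolding e by simp
qed

context
  fixes X :: "'a set" and op :: "'a \<Rightarrow> 'a \<Rightarrow> 'a" and t :: nat
  assumes q: "quandle X op" and ty: "quandle_type X op t"
begin

lemma central_pos:
  assumes x: "x \<in> X" and y: "y \<in> X"
  shows "((y, True) # replicate t (x, True), replicate t (x, True) @ [(y, True)]) \<in> as_rel X op"
  using swap_pow[OF q x y, of t] ty y x unfolding quandle_type_def by simp

lemma central_neg:
  assumes x: "x \<in> X" and y: "y \<in> X"
  shows "((y, False) # replicate t (x, True), replicate t (x, True) @ [(y, False)]) \<in> as_rel X op"
proof -
  let ?R = "replicate t (x, True)"
  have h1: "((y, False) # ?R, (y, False) # ?R @ [(y, True), (y, False)]) \<in> as_rel X op"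
    using as_rel.cong[OF as_rel.sym[OF as_rel.cancel[OF y, of True]], of "[(y,False)] @ ?R" "[]"] x y
    by simp
  have h2: "((y, False) # ?R @ [(y, True), (y, False)], (y, False) # (y, True) # ?R @ [(y, False)]) \<in> as_rel X op"
    using as_rel.cong[OF as_rel.sym[OF central_pos[OF x y]], of "[(y,False)]" "[(y,False)]"] x y by simp
  have h3: "((y, False) # (y, True) # ?R @ [(y, False)], ?R @ [(y, False)]) \<in> as_rel X op"
    using as_rel.cong[OF as_rel.cancel[OF y, of False], of "[]" "?R @ [(y, False)]"] x y by simp
  show ?thesis using as_rel.trans[OF as_rel.trans[OF h1 h2] h3] .
qed

lemma central_word:
  assumes x: "x \<in> X"
  shows "w \<in> words X \<Longrightarrow> (w @ replicate t (x, True), replicate t (x, True) @ w) \<in> as_rel X op"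
proof (induction w)
  case Nil
  then show ?case using as_rel.refl[of "replicate t (x, True)" X op] x by simp
next
  case (Cons l w)
  obtain y s where l: "l = (y, s)" by fastforce
  have y: "y \<in> X" and w: "w \<in> words X" using Cons.prems l by auto
  let ?R = "replicate t (x, True)"
  have h1: "(l # w @ ?R, l # ?R @ w) \<in> as_rel X op"
    using as_rel.cong[OF Cons.IH[OF w], of "[l]" "[]"] l y by simp
  have "(l # ?R, ?R @ [l]) \<in> as_rel X op"
    using central_pos[OF x y] central_neg[OF x y] l by (cases s) auto
  then have h2: "(l # ?R @ w, ?R @ l # w) \<in> as_rel X op"
    using as_rel.cong[of "l # ?R" "?R @ [l]" X op "[]" w] w by simp
  show ?case using as_rel.trans[OF h1 h2] by simp
qed

lemma step_eq:
  assumes a: "a \<in> X" and b: "b \<in> X"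
  shows "(replicate t (op a b, True), replicate t (a, True)) \<in> as_rel X op"
proof -
  have ab: "op a b \<in> X" using quandle_closed[OF q a b] .
  have gen: "((b, True) # replicate n (op a b, True), replicate n (a, True) @ [(b, True)]) \<in> as_rel X op"
    for n
  proof (induction n)
    case 0
    then show ?case using as_rel.refl[of "[(b,True)]" X op] b by simp
  next
    case (Suc n)
    have h1: "((b, True) # (op a b, True) # replicate n (op a b, True),
           (a, True) # (b, True) # replicate n (op a b, True)) \<in> as_rel X op"
      using as_rel.cong[OF swap_rel[OF q a b], of "[]" "replicate n (op a b, True)"] ab by simp
    have h2: "((a, True) # (b, True) # replicate n (op a b, True),
                    (a, True) # replicate n (a, True) @ [(b, True)]) \<in> as_rel X op"
      using as_rel.cong[OF Suc.IH, of "[(a,True)]" "[]"] a by simp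
    show ?case using as_rel.trans[OF h1 h2] by simp
  qed
  let ?A = "replicate t (a, True)" and ?B = "replicate t (op a b, True)"
  have cw: "(?A @ [(b, True)], (b, True) # ?A) \<in> as_rel X op"
    using as_rel.sym[OF central_word[OF a, of "[(b,True)]"]] b by simp
  have c: "((b, True) # ?B, (b, True) # ?A) \<in> as_rel X op"
    using as_rel.trans[OF gen[of t] cw] .
  have c2: "((b, False) # (b, True) # ?B, (b, False) # (b, True) # ?A) \<in> as_rel X op"
    using as_rel.cong[OF c, of "[(b,False)]" "[]"] b by simp
  have d: "((b, False) # (b, True) # w, w) \<in> as_rel X op" if "w \<in> words X" for w
    using as_rel.cong[OF as_rel.cancel[OF b, of False], of "[]" w] that by simp
  have dA: "((b, False) # (b, True) # ?A, ?A) \<in> as_rel X op" using d a by simp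
  have dB: "((b, False) # (b, True) # ?B, ?B) \<in> as_rel X op" using d ab by simp
  show ?thesis
    using as_rel.trans[OF as_rel.sym[OF dB] as_rel.trans[OF c2 dA]] .
qed

lemma conn_eq:
  assumes c: "quandle_connected X op" and x: "x \<in> X" and y: "y \<in> X"
  shows "(replicate t (x, True), replicate t (y, True)) \<in> as_rel X op"
proof -
  have "(x, y) \<in> ({(a, op a b) | a b. a \<in> X \<and> b \<in> X} \<union> {(op a b, a) | a b. a \<in> X \<and> b \<in> X})\<^sup>*"
    using bspec[OF bspec[OF c[unfolded quandle_connected_def] x] y] .
  then show ?thesis
  proof (induction rule: rtrancl_induct)
    case base
    then show ?case using as_rel.refl[of "replicate t (x, True)" X op] x by simp
  next
    case (step u v)
    from step.hyps(2) show ?case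
    proof
      assume "(u, v) \<in> {(a, op a b) | a b. a \<in> X \<and> b \<in> X}"
      then obtain b where u: "u \<in> X" and b: "b \<in> X" and v: "v = op u b" by blast
      show ?case using as_rel.trans[OF step.IH as_rel.sym[OF step_eq[OF u b]]] v by simp
    next
      assume "(u, v) \<in> {(op a b, a) | a b. a \<in> X \<and> b \<in> X}"
      then obtain b where v: "v \<in> X" and b: "b \<in> X" and u: "u = op v b" by blast
      show ?case using as_rel.trans[OF step.IH[unfolded u] step_eq[OF v b]] .
    qed
  qed
qed

end

theorem lemma3p5:
  fixes X :: "'a set" and op :: "'a \<Rightarrow> 'a \<Rightarrow> 'a" and t :: nat
  assumes "quandle X op" and "quandle_connected X op" and "quandle_type X op t"
  shows "\<forall>x\<in>X. \<forall>y\<in>X.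
           gen X op x [^]\<^bsub>adjoint_group X op\<^esub> t = gen X op y [^]\<^bsub>adjoint_group X op\<^esub> t \<and>
           (\<forall>g\<in>carrier (adjoint_group X op).
              g \<otimes>\<^bsub>adjoint_group X op\<^esub> (gen X op x [^]\<^bsub>adjoint_group X op\<^esub> t) =
              (gen X op x [^]\<^bsub>adjoint_group X op\<^esub> t) \<otimes>\<^bsub>adjoint_group X op\<^esub> g)"
proof (intro ballI conjI)
  fix x y assume x: "x \<in> X" and y: "y \<in> X"
  have eq: "equiv (words X) (as_rel X op)" using as_rel_equiv[OF assms(1)] .
  show "gen X op x [^]\<^bsub>adjoint_group X op\<^esub> t = gen X op y [^]\<^bsub>adjoint_group X op\<^esub> t"
    unfolding pow_gen[OF assms(1) x] pow_gen[OF assms(1) y]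
    using equiv_class_eq[OF eq conn_eq[OF assms(1) assms(3) assms(2) x y]] .
  fix g assume "g \<in> carrier (adjoint_group X op)"
  then obtain w where w: "w \<in> words X" and g: "g = as_rel X op `` {w}"
    unfolding adjoint_group_def by (auto elim: quotientE)
  show "g \<otimes>\<^bsub>adjoint_group X op\<^esub> (gen X op x [^]\<^bsub>adjoint_group X op\<^esub> t) =
              (gen X op x [^]\<^bsub>adjoint_group X op\<^esub> t) \<otimes>\<^bsub>adjoint_group X op\<^esub> g"
    unfolding pow_gen[OF assms(1) x] g
    using equiv_class_eq[OF eq central_word[OF assms(1) assms(3) x w]] w x
    by (simp add: mult_adj[OF assms(1)])
qed

end
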